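(* Let $\mathcal{P}_1,\dots,\mathcal{P}_k$ be finite posets with $p_j=|\mathcal{P}_j|$ and $r\ge1$. The set $\mathcal{N}_{\le r}$ is closed. Equivalently, for any $\mathbf{T}\in\mathbb{R}^{p_1\times\cdots\times p_k}$ the infimum $\inf_{\boldsymbol\theta\in\mathcal{N}_{\le r}}\Vert\mathbf{T}-\boldsymbol\theta\Vert_F$ is attained by some $\boldsymbol\theta\in\mathcal{N}_{\le r}$.
   Context: For a finite poset $\mathcal{Q}$, the order cone $\mathcal{C}(\mathcal{Q})$ is the set of $\mathbf{f}\in\mathbb{R}^{\mathcal{Q}}$ with $f_x\ge0$ for all $x$ and $f_x\le f_y$ whenever $x\preceq y$. $\mathcal{N}_{\le r}$ is the set of tensors in $\mathbb{R}^{\mathcal{P}_1\times\cdots\times\mathcal{P}_k}\cong\mathbb{R}^{p_1\times\cdots\times p_k}$ of the form $\sum_{i=1}^r\otimes_{j=1}^k\mathbf{v}^{(ij)}$ with $\mathbf{v}^{(ij)}\in\mathcal{C}(\mathcal{P}_j)$. $\Vert\cdot\Vert_F$ is the Frobenius norm, $\Vert\mathbf{T}\Vert_F^2=\sum_{i_1,\dots,i_k}T_{i_1\dots i_k}^2$. *)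

theory Defs
  imports "HOL-Analysis.Analysis"
begin

definition order_cone :: "'a set \<Rightarrow> ('a \<times> 'a) set \<Rightarrow> ('a \<Rightarrow> real) set" where
  "order_cone Q le = {f. f \<in> extensional Q \<and> (\<forall>x\<in>Q. 0 \<le> f x) \<and>
                         (\<forall>x\<in>Q. \<forall>y\<in>Q. (x, y) \<in> le \<longrightarrow> f x \<le> f y)}"

definition tensor_idx :: "nat \<Rightarrow> (nat \<Rightarrow> 'a set) \<Rightarrow> (nat \<Rightarrow> 'a) set" where
  "tensor_idx k P = PiE {..<k} P"

definition tensors :: "nat \<Rightarrow> (nat \<Rightarrow> 'a set) \<Rightarrow> ((nat \<Rightarrow> 'a) \<Rightarrow> real) set" where
  "tensors k P = extensional (tensor_idx k P)"

definition N_le :: "nat \<Rightarrow> (nat \<Rightarrow> 'a set) \<Rightarrow> (nat \<Rightarrow> ('a \<times> 'a) set) \<Rightarrow> nat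
                     \<Rightarrow> ((nat \<Rightarrow> 'a) \<Rightarrow> real) set" where
  "N_le k P le r = {\<theta>. \<exists>v :: nat \<Rightarrow> nat \<Rightarrow> 'a \<Rightarrow> real.
      (\<forall>i<r. \<forall>j<k. v i j \<in> order_cone (P j) (le j)) \<and>
      \<theta> = (\<lambda>x. if x \<in> tensor_idx k P then (\<Sum>i<r. \<Prod>j<k. v i j (x j)) else 0)}"

definition frob :: "nat \<Rightarrow> (nat \<Rightarrow> 'a set) \<Rightarrow> ((nat \<Rightarrow> 'a) \<Rightarrow> real) \<Rightarrow> real" where
  "frob k P T = sqrt (\<Sum>x\<in>tensor_idx k P. (T x)\<^sup>2)"

end

theory Submission
  imports Defs
begin

lemma cone_scale:
  assumes "f \<in> order_cone Q le" "0 \<le> c"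
  shows "(\<lambda>a. if a \<in> Q then f a * c else undefined) \<in> order_cone Q le"
  using assms by (auto simp: order_cone_def extensional_def intro: mult_right_mono)

lemma normalize:
  fixes u :: "nat \<Rightarrow> 'a \<Rightarrow> real"
  assumes k: "1 \<le> k" and fin: "\<And>j. j < k \<Longrightarrow> finite (P j)"
    and u: "\<And>j. j < k \<Longrightarrow> u j \<in> order_cone (P j) (le j)"
    and bnd: "\<And>x. x \<in> tensor_idx k P \<Longrightarrow> (\<Prod>j<k. u j (x j)) \<le> M"
  shows "\<exists>w. (\<forall>j<k. w j \<in> order_cone (P j) (le j) \<and> (\<forall>a\<in>P j. w j a \<le> max 1 M)) \<and>
             (\<forall>x\<in>tensor_idx k P. (\<Prod>j<k. w j (x j)) = (\<Prod>j<k. u j (x j)))"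
proof (cases "\<exists>j<k. \<forall>a\<in>P j. u j a = 0")
  case True
  then obtain j0 where j0: "j0 < k" "\<forall>a\<in>P j0. u j0 a = 0" by blast
  have Z2: "(\<Prod>j<k. u j (x j)) = 0" if "x \<in> tensor_idx k P" for x
  proof -
    have "x j0 \<in> P j0" using that j0 by (auto simp: tensor_idx_def PiE_iff)
    then show ?thesis using j0 by (intro prod_zero) auto
  qed
  have Z1: "(\<lambda>a. if a \<in> P j then 0 else undefined) \<in> order_cone (P j) (le j)" for j
    by (auto simp: order_cone_def extensional_def)
  have Z3: "(\<Prod>j<k. (if x j \<in> P j then 0 else undefined)) = (0::real)"
    if "x \<in> tensor_idx k P" for x
    using that j0 by (intro prod_zero) (auto simp: tensor_idx_def PiE_iff intro!: bexI[of _ j0])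
  have Z4: "(\<forall>j<k. (\<lambda>a. if a \<in> P j then 0 else undefined) \<in> order_cone (P j) (le j) \<and> (\<forall>a\<in>P j. (\<lambda>a. if a \<in> P j then 0 else undefined) a \<le> max 1 M))"
    using Z1 by auto
  show ?thesis
    apply (rule exI[of _ "\<lambda>j a. if a \<in> P j then 0 else undefined"])
    apply (intro conjI ballI)
     apply (rule Z4)
    apply (simp only: Z2 Z3)
    done
next
  case False
  have uge: "0 \<le> u j a" if "j < k" "a \<in> P j" for j a
    using u[OF that(1)] that(2) by (auto simp: order_cone_def)
  define m where "m j = Max (u j ` P j)" for j
  have ne: "P j \<noteq> {}" if "j < k" for j using False that by auto
  have mge: "u j a \<le> m j" if "j < k" "a \<in> P j" for j a
    unfolding m_def using fin[OF that(1)] that(2) by (intro Max_ge) auto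
  have "\<exists>a\<in>P j. u j a = m j" if "j < k" for j
  proof -
    have "m j \<in> u j ` P j" unfolding m_def using fin[OF that] ne[OF that] by (intro Max_in) auto
    then show ?thesis by auto
  qed
  then obtain am where am: "\<And>j. j < k \<Longrightarrow> am j \<in> P j \<and> u j (am j) = m j" by metis
  have mpos: "0 < m j" if jk: "j < k" for j
  proof -
    obtain a where "a \<in> P j" "u j a \<noteq> 0" using False jk by blast
    note a = this
    have "0 \<le> u j a" by (rule uge[OF jk a(1)])
    moreover have "u j a \<le> m j" by (rule mge[OF jk a(1)])
    ultimately show ?thesis using a(2) by linarith
  qed
  define c where "c = (\<Prod>j\<in>{1..<k}. m j)"
  have cpos: "0 < c" unfolding c_def by (intro prod_pos) (auto intro: mpos)
  define w where "w j a = (if a \<in> P j then (if j = 0 then u 0 a * c else u j a * (1 / m j)) else undefined)" for j a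
  have wcone: "w j \<in> order_cone (P j) (le j)" if "j < k" for j
  proof (cases "j = 0")
    case True
    then show ?thesis using cone_scale[OF u[OF that], of c] cpos by (simp add: w_def[abs_def] cong: if_cong)
  next
    case False
    then show ?thesis using cone_scale[OF u[OF that], of "1 / m j"] mpos[OF that] by (simp add: w_def[abs_def] cong: if_cong)
  qed
  have wb: "w j a \<le> max 1 M" if "j < k" "a \<in> P j" for j a
  proof -
    note aP = that(2)
    show ?thesis
    proof (cases "j = 0")
      case False
      have "u j a / m j \<le> 1" using mge[OF that] mpos[OF that(1)] by simp
      then show ?thesis using False aP by (simp add: w_def)
    next
      case True
      define x where "x = (\<lambda>i. if i = 0 then a else if i < k then am i else undefined)"
      have xI: "x \<in> tensor_idx k P" using am aP True k
        by (auto simp: x_def tensor_idx_def PiE_iff extensional_def)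
      have kk: "{..<k} = insert 0 {1..<k}" using k by auto
      have "(\<Prod>j<k. u j (x j)) = u 0 a * c"
        unfolding kk c_def using am by (simp add: x_def)
      then show ?thesis using bnd[OF xI] True aP by (simp add: w_def)
    qed
  qed
  have "(\<Prod>j<k. w j (x j)) = (\<Prod>j<k. u j (x j))" if xI: "x \<in> tensor_idx k P" for x
  proof -
    have xP: "x j \<in> P j" if "j < k" for j using xI that by (auto simp: tensor_idx_def PiE_iff)
    have kk: "{..<k} = insert 0 {1..<k}" using k by auto
    have "(\<Prod>j<k. w j (x j)) = u 0 (x 0) * c * (\<Prod>j\<in>{1..<k}. u j (x j) * (1 / m j))"
      unfolding kk using xP k by (simp add: w_def)
    also have "\<dots> = u 0 (x 0) * (\<Prod>j\<in>{1..<k}. u j (x j)) * (c * (\<Prod>j\<in>{1..<k}. 1 / m j))"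
      by (simp only: prod.distrib mult_ac)
    also have "c * (\<Prod>j\<in>{1..<k}. 1 / m j) = 1"
      unfolding c_def prod.distrib[symmetric] using mpos by (intro prod.neutral) (auto, metis less_irrefl)
    finally show ?thesis unfolding kk by simp
  qed
  then show ?thesis using wcone wb by blast
qed


lemma closed_imp_le:
  "closed {w :: 'b \<Rightarrow> real. C \<longrightarrow> w p \<le> w q}"
proof (cases C)
  case True
  then show ?thesis by (simp add: closed_Collect_le)
qed simp

lemma abs_le_frob:
  fixes g :: "'b \<Rightarrow> real"
  assumes "finite I" "x \<in> I"
  shows "\<bar>g x\<bar> \<le> sqrt (\<Sum>y\<in>I. (g y)\<^sup>2)"
proof -
  have "(g x)\<^sup>2 \<le> (\<Sum>y\<in>I. (g y)\<^sup>2)" using assms by (intro member_le_sum) auto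
  then have "sqrt ((g x)\<^sup>2) \<le> sqrt (\<Sum>y\<in>I. (g y)\<^sup>2)" by (rule real_sqrt_le_mono)
  then show ?thesis by simp
qed

lemma hausdorff_fun: "Hausdorff_space (euclidean :: ('b \<Rightarrow> real) topology)"
  by (metis euclidean_product_topology Hausdorff_space_product_topology Hausdorff_space_euclidean)

lemma compact_closed_fun:
  fixes S :: "('b \<Rightarrow> real) set"
  assumes "compact S" shows "closed S"
proof -
  have "compactin euclidean S" using assms by (simp only: compactin_euclidean_iff)
  then have "closedin euclidean S" by (rule compactin_imp_closedin[OF hausdorff_fun])
  then show ?thesis by (simp only: closed_closedin)
qed

lemma compact_PiE_UNIV:
  fixes S :: "'b \<Rightarrow> real set"
  assumes "\<And>i. compact (S i)"
  shows "compact (PiE UNIV S)"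
proof -
  have "compactin (product_topology (\<lambda>_. euclidean) UNIV) (PiE UNIV S)"
    using assms by (simp add: compactin_PiE)
  then show ?thesis by (simp add: euclidean_product_topology)
qed

theorem theorem13:
  fixes k r :: nat and P :: "nat \<Rightarrow> 'a set" and le :: "nat \<Rightarrow> ('a \<times> 'a) set"
  assumes "1 \<le> k" and "1 \<le> r"
    and "\<And>j. j < k \<Longrightarrow> finite (P j)"
    and "\<And>j. j < k \<Longrightarrow> partial_order_on (P j) (le j)"
  shows "closed (N_le k P le r) \<and>
         (\<forall>T\<in>tensors k P. \<exists>\<theta>\<in>N_le k P le r.
            frob k P (T - \<theta>) = (INF \<theta>'\<in>N_le k P le r. frob k P (T - \<theta>')))"
proof -
  note k = assms(1) and fin = assms(3)
  define I where "I = tensor_idx k P"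
  define N where "N = N_le k P le r"
  have finI: "finite I" unfolding I_def tensor_idx_def using fin by (intro finite_PiE) auto
  have xP: "x j \<in> P j" if "x \<in> I" "j < k" for x j
    using that by (auto simp: I_def tensor_idx_def PiE_iff)
  define F :: "(nat \<times> nat \<times> 'a \<Rightarrow> real) \<Rightarrow> ((nat \<Rightarrow> 'a) \<Rightarrow> real)" where
    "F w = (\<lambda>x. if x \<in> I then (\<Sum>i<r. \<Prod>j<k. w (i, j, x j)) else 0)" for w
  define K where "K c = PiE UNIV (\<lambda>(i,j,a). if i < r \<and> j < k \<and> a \<in> P j then {0..c} else {0::real})
     \<inter> {w. \<forall>i j a b. (i < r \<and> j < k \<and> a \<in> P j \<and> b \<in> P j \<and> (a, b) \<in> le j) \<longrightarrow> w (i,j,a) \<le> w (i,j,b)}"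
    for c
  define box where "box M = {\<theta>::(nat \<Rightarrow> 'a) \<Rightarrow> real. \<forall>x\<in>I. \<theta> x \<le> M}" for M
  have compK: "compact (K c)" for c
  proof -
    have "compact (PiE UNIV (\<lambda>(i,j,a). if i < r \<and> j < k \<and> a \<in> P j then {0..c} else {0::real}))"
      by (intro compact_PiE_UNIV) auto
    moreover have "closed {w :: nat \<times> nat \<times> 'a \<Rightarrow> real. \<forall>i j a b. (i < r \<and> j < k \<and> a \<in> P j \<and> b \<in> P j \<and> (a, b) \<in> le j) \<longrightarrow> w (i,j,a) \<le> w (i,j,b)}"
      by (intro closed_Collect_all closed_imp_le)
    ultimately show ?thesis unfolding K_def by (rule compact_Int_closed)
  qed
  have contF: "continuous_on UNIV F"
    unfolding F_def
  proof (intro continuous_on_coordinatewise_then_product)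
    fix x
    show "continuous_on UNIV (\<lambda>w :: nat \<times> nat \<times> 'a \<Rightarrow> real. if x \<in> I then \<Sum>i<r. \<Prod>j<k. w (i, j, x j) else 0)"
      by (cases "x \<in> I") (auto intro!: continuous_intros continuous_on_product_coordinates)
  qed
  have FK: "F ` K c \<subseteq> N" for c
  proof
    fix \<theta> assume "\<theta> \<in> F ` K c"
    then obtain w where w: "w \<in> K c" "\<theta> = F w" by auto
    define v where "v i j a = (if a \<in> P j then w (i, j, a) else undefined)" for i j a
    have wP: "w \<in> PiE UNIV (\<lambda>(i,j,a). if i < r \<and> j < k \<and> a \<in> P j then {0..c} else {0::real})"
      using w(1) unfolding K_def by blast
    have word: "\<forall>i j a b. (i < r \<and> j < k \<and> a \<in> P j \<and> b \<in> P j \<and> (a, b) \<in> le j) \<longrightarrow> w (i,j,a) \<le> w (i,j,b)"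
      using w(1) unfolding K_def by blast
    have "v i j \<in> order_cone (P j) (le j)" if ij: "i < r" "j < k" for i j
    proof -
      have "0 \<le> w (i, j, a)" if "a \<in> P j" for a
      proof -
        have "w (i, j, a) \<in> (\<lambda>(i,j,a). if i < r \<and> j < k \<and> a \<in> P j then {0..c} else {0::real}) (i, j, a)"
          by (rule PiE_mem[OF wP UNIV_I])
        then show ?thesis using that ij by simp
      qed
      moreover have "w (i,j,a) \<le> w (i,j,b)" if "a \<in> P j" "b \<in> P j" "(a, b) \<in> le j" for a b
        using word that ij by blast
      ultimately show ?thesis unfolding order_cone_def v_def extensional_def by auto
    qed
    moreover have "\<theta> = (\<lambda>x. if x \<in> tensor_idx k P then (\<Sum>i<r. \<Prod>j<k. v i j (x j)) else 0)"
      unfolding w(2) F_def I_def[symmetric] v_def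
      by (intro ext) (auto intro!: sum.cong prod.cong simp: xP)
    ultimately show "\<theta> \<in> N" unfolding N_def N_le_def by blast
  qed
  have NK: "N \<inter> box M \<subseteq> F ` K (max 1 M)" for M
  proof
    fix \<theta> assume th: "\<theta> \<in> N \<inter> box M"
    then obtain v where v: "\<forall>i<r. \<forall>j<k. v i j \<in> order_cone (P j) (le j)"
      and thv: "\<theta> = (\<lambda>x. if x \<in> I then (\<Sum>i<r. \<Prod>j<k. v i j (x j)) else 0)"
      unfolding N_def N_le_def I_def by blast
    have vge: "0 \<le> v i j a" if "i < r" "j < k" "a \<in> P j" for i j a
      using v that unfolding order_cone_def by auto
    have tb: "(\<Prod>j<k. v i j (x j)) \<le> M" if "i < r" "x \<in> I" for i x
    proof -
      have "(\<Prod>j<k. v i j (x j)) \<le> (\<Sum>i<r. \<Prod>j<k. v i j (x j))"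
        using that by (intro member_le_sum prod_nonneg) (auto intro!: vge xP)
      also have "\<dots> = \<theta> x" using thv that by simp
      also have "\<dots> \<le> M" using th that unfolding box_def by auto
      finally show ?thesis .
    qed
    have "\<exists>w. (\<forall>j<k. w j \<in> order_cone (P j) (le j) \<and> (\<forall>a\<in>P j. w j a \<le> max 1 M)) \<and>
             (\<forall>x\<in>tensor_idx k P. (\<Prod>j<k. w j (x j)) = (\<Prod>j<k. v i j (x j)))" if "i < r" for i
      using that v tb unfolding I_def by (intro normalize[OF k fin]) auto
    then obtain W where W: "\<And>i. i < r \<Longrightarrow> (\<forall>j<k. W i j \<in> order_cone (P j) (le j) \<and> (\<forall>a\<in>P j. W i j a \<le> max 1 M)) \<and>
             (\<forall>x\<in>I. (\<Prod>j<k. W i j (x j)) = (\<Prod>j<k. v i j (x j)))"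
      unfolding I_def by metis
    define w where "w = (\<lambda>(i, j, a). if i < r \<and> j < k \<and> a \<in> P j then W i j a else 0)"
    have "w \<in> K (max 1 M)"
      unfolding K_def w_def using W by (auto simp: PiE_iff order_cone_def)
    moreover have "\<theta> = F w"
      unfolding thv F_def w_def using W by (intro ext) (auto intro!: sum.cong prod.cong simp: xP)
    ultimately show "\<theta> \<in> F ` K (max 1 M)" by blast
  qed
  have closedFK: "closed (F ` K c)" for c
    by (intro compact_closed_fun compact_continuous_image continuous_on_subset[OF contF] compK) auto
  have closedbox: "closed (box M)" for M
  proof -
    have "box M = (\<Inter>x\<in>I. {\<theta>. \<theta> x \<le> M})" unfolding box_def by auto
    then show ?thesis
      by (auto intro!: closed_INT closed_Collect_le continuous_on_product_coordinates continuous_on_const)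
  qed
  have openU: "open {\<theta>::(nat \<Rightarrow> 'a) \<Rightarrow> real. \<forall>x\<in>I. \<theta> x < M}" for M
    using product_topology_basis'[OF finI, of "\<lambda>_. {..<M}" id] by simp
  have NeqK: "N \<inter> box M = F ` K (max 1 M) \<inter> box M" for M
    using NK FK by blast
  have closedN: "closed N"
    unfolding closed_def
  proof (rule open_subopen[THEN iffD2], intro ballI)
    fix \<theta>0 assume "\<theta>0 \<in> - N"
    define M where "M = (\<Sum>x\<in>I. \<bar>\<theta>0 x\<bar>) + 1"
    define T where "T = {\<theta>::(nat \<Rightarrow> 'a) \<Rightarrow> real. \<forall>x\<in>I. \<theta> x < M} \<inter> - (F ` K (max 1 M) \<inter> box M)"
    have "open T" unfolding T_def using openU closedFK closedbox by (intro open_Int open_Compl closed_Int) auto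
    moreover have "\<theta>0 \<in> T"
    proof -
      have "\<theta>0 x < M" if "x \<in> I" for x
      proof -
        have "\<theta>0 x \<le> \<bar>\<theta>0 x\<bar>" by simp
        also have "\<dots> \<le> (\<Sum>x\<in>I. \<bar>\<theta>0 x\<bar>)" using finI that by (intro member_le_sum) auto
        finally show ?thesis unfolding M_def by simp
      qed
      then show ?thesis unfolding T_def using \<open>\<theta>0 \<in> - N\<close> NeqK[of M] by auto
    qed
    moreover have "T \<subseteq> - N"
      unfolding T_def using NeqK[of M] by (force simp: box_def)
    ultimately show "\<exists>T. open T \<and> \<theta>0 \<in> T \<and> T \<subseteq> - N" by blast
  qed
  have zeroN: "(\<lambda>_. 0) \<in> N"
  proof -
    define v :: "nat \<Rightarrow> nat \<Rightarrow> 'a \<Rightarrow> real" where "v i j a = (if a \<in> P j then 0 else undefined)" for i j a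
    have "v i j \<in> order_cone (P j) (le j)" for i j
      by (auto simp: v_def order_cone_def extensional_def)
    moreover have "(\<lambda>_. 0) = (\<lambda>x. if x \<in> tensor_idx k P then (\<Sum>i<r. \<Prod>j<k. v i j (x j)) else 0)"
    proof (intro ext)
      fix x
      show "0 = (if x \<in> tensor_idx k P then (\<Sum>i<r. \<Prod>j<k. v i j (x j)) else 0)"
      proof (cases "x \<in> tensor_idx k P")
        case True
        then have "x 0 \<in> P 0" using xP[of x 0] k unfolding I_def by auto
        then have "(\<Prod>j<k. v i j (x j)) = 0" for i
          using k by (intro prod_zero) (auto simp: v_def intro!: bexI[of _ 0])
        then have "(\<Sum>i<r. \<Prod>j<k. v i j (x j)) = 0" by (intro sum.neutral) blast
        then show ?thesis by (simp only: if_P[OF True])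
      qed simp
    qed
    ultimately show ?thesis unfolding N_def N_le_def by blast
  qed
  have part2: "\<exists>\<theta>\<in>N. frob k P (T - \<theta>) = (INF \<theta>'\<in>N. frob k P (T - \<theta>'))" for T
  proof -
    define d where "d \<theta> = frob k P (T - \<theta>)" for \<theta>
    have d_eq: "d \<theta> = sqrt (\<Sum>x\<in>I. (T x - \<theta> x)\<^sup>2)" for \<theta>
      unfolding d_def frob_def I_def by simp
    have contd: "continuous_on UNIV d"
      unfolding d_eq by (intro continuous_intros continuous_on_product_coordinates)
    define M where "M = (\<Sum>x\<in>I. \<bar>T x\<bar>) + d (\<lambda>_. 0)"
    define S where "S = (F ` K (max 1 M) \<inter> box M) \<inter> {\<theta>. d \<theta> \<le> d (\<lambda>_. 0)}"
    have inbox: "\<theta> \<in> box M" if "d \<theta> \<le> d (\<lambda>_. 0)" for \<theta>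
      unfolding box_def
    proof (intro CollectI ballI)
      fix x assume x: "x \<in> I"
      have "\<bar>T x - \<theta> x\<bar> \<le> d \<theta>" unfolding d_eq using abs_le_frob[OF finI x, of "\<lambda>x. T x - \<theta> x"] by simp
      moreover have "\<bar>T x\<bar> \<le> (\<Sum>x\<in>I. \<bar>T x\<bar>)" using finI x by (intro member_le_sum) auto
      ultimately show "\<theta> x \<le> M" unfolding M_def using that by linarith
    qed
    have compS: "compact S"
      unfolding S_def
      by (intro compact_Int_closed closedbox closed_Collect_le contd continuous_on_const
          compact_continuous_image continuous_on_subset[OF contF] compK) auto
    have zS: "(\<lambda>_. 0) \<in> S"
      unfolding S_def using zeroN inbox NK[of M] by blast
    obtain \<theta>s where ths: "\<theta>s \<in> S" "\<And>y. y \<in> S \<Longrightarrow> d \<theta>s \<le> d y"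
      using continuous_attains_inf[OF compS _ continuous_on_subset[OF contd]] zS by blast
    have thsN: "\<theta>s \<in> N" using ths(1) FK unfolding S_def by blast
    have minN: "d \<theta>s \<le> d \<theta>" if "\<theta> \<in> N" for \<theta>
    proof (cases "d \<theta> \<le> d (\<lambda>_. 0)")
      case True
      then have "\<theta> \<in> S" unfolding S_def using that inbox NK[of M] by blast
      then show ?thesis by (rule ths(2))
    next
      case False
      then show ?thesis using ths(2)[OF zS] by simp
    qed
    have "(INF \<theta>'\<in>N. d \<theta>') = d \<theta>s"
      using thsN minN by (intro cInf_eq_minimum) auto
    then show ?thesis using thsN unfolding d_def by metis
  qed
  show ?thesis using closedN part2 unfolding N_def by blast
qed

end
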